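(* Let $G$ be a profinite group and $k$ an algebraically closed field (with the discrete topology). Let $V$ and $W$ be irreducible smooth representations of $G$ over $k$ and $\chi$ a one-dimensional smooth character of $G$ over $k$. Then $\chi^{\oplus2}$ is not a subrepresentation of $V\otimes W$. *)

theory Defs
  imports "HOL-Analysis.Analysis" "HOL-Algebra.Group" "HOL-Computational_Algebra.Polynomial"
begin

definition alg_closed :: "'k::field itself \<Rightarrow> bool" where
  "alg_closed _ \<longleftrightarrow> (\<forall>p :: 'k poly. degree p > 0 \<longrightarrow> (\<exists>x. poly p x = 0))"

definition topological_group_on :: "('g, 'b) monoid_scheme \<Rightarrow> 'g topology \<Rightarrow> bool" where
  "topological_group_on G T \<longleftrightarrow> group G \<and> topspace T = carrier G \<and>
     continuous_map (prod_topology T T) T (\<lambda>(x, y). x \<otimes>\<^bsub>G\<^esub> y) \<and>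
     continuous_map T T (\<lambda>x. inv\<^bsub>G\<^esub> x)"

definition profinite_group :: "('g, 'b) monoid_scheme \<Rightarrow> 'g topology \<Rightarrow> bool" where
  "profinite_group G T \<longleftrightarrow> topological_group_on G T \<and> compact_space T \<and> Hausdorff_space T \<and>
     (\<forall>x\<in>topspace T. connected_component_of_set T x = {x})"

definition representation ::
  "('g, 'b) monoid_scheme \<Rightarrow> ('k::field \<Rightarrow> 'v::ab_group_add \<Rightarrow> 'v) \<Rightarrow> ('g \<Rightarrow> 'v \<Rightarrow> 'v) \<Rightarrow> bool" where
  "representation G sV \<rho> \<longleftrightarrow> vector_space sV \<and>
     (\<forall>g\<in>carrier G. Vector_Spaces.linear sV sV (\<rho> g)) \<and>
     \<rho> \<one>\<^bsub>G\<^esub> = id \<and>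
     (\<forall>g\<in>carrier G. \<forall>h\<in>carrier G. \<rho> (g \<otimes>\<^bsub>G\<^esub> h) = \<rho> g \<circ> \<rho> h)"

definition smooth_rep ::
  "('g, 'b) monoid_scheme \<Rightarrow> 'g topology \<Rightarrow> ('k::field \<Rightarrow> 'v::ab_group_add \<Rightarrow> 'v) \<Rightarrow> ('g \<Rightarrow> 'v \<Rightarrow> 'v) \<Rightarrow> bool" where
  "smooth_rep G T sV \<rho> \<longleftrightarrow> representation G sV \<rho> \<and>
     (\<forall>v. openin T {g \<in> carrier G. \<rho> g v = v})"

definition irreducible_rep ::
  "('g, 'b) monoid_scheme \<Rightarrow> ('k::field \<Rightarrow> 'v::ab_group_add \<Rightarrow> 'v) \<Rightarrow> ('g \<Rightarrow> 'v \<Rightarrow> 'v) \<Rightarrow> bool" where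
  "irreducible_rep G sV \<rho> \<longleftrightarrow> representation G sV \<rho> \<and> (\<exists>v::'v. v \<noteq> 0) \<and>
     (\<forall>S. module.subspace sV S \<and> (\<forall>g\<in>carrier G. \<forall>v\<in>S. \<rho> g v \<in> S) \<longrightarrow> S = {0} \<or> S = UNIV)"

(* Tensor product V \<otimes>_k W = (free k-vector space on V \<times> W) / (bilinearity relations).
   Elements of the free space: finitely supported functions V \<times> W \<Rightarrow> k. *)
definition tensor_free :: "('v \<times> 'w \<Rightarrow> 'k::field) \<Rightarrow> bool" where
  "tensor_free f \<longleftrightarrow> finite {x. f x \<noteq> 0}"

definition tdelta :: "'v \<times> 'w \<Rightarrow> 'v \<times> 'w \<Rightarrow> 'k::field" where
  "tdelta p = (\<lambda>x. if x = p then 1 else 0)"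

inductive_set tensor_rel ::
  "('k::field \<Rightarrow> 'v::ab_group_add \<Rightarrow> 'v) \<Rightarrow> ('k \<Rightarrow> 'w::ab_group_add \<Rightarrow> 'w) \<Rightarrow> ('v \<times> 'w \<Rightarrow> 'k) set"
  for sV sW where
  zero: "(\<lambda>_. 0) \<in> tensor_rel sV sW"
| addl: "(\<lambda>x. tdelta (v + v', w) x - tdelta (v, w) x - tdelta (v', w) x) \<in> tensor_rel sV sW"
| addr: "(\<lambda>x. tdelta (v, w + w') x - tdelta (v, w) x - tdelta (v, w') x) \<in> tensor_rel sV sW"
| scl: "(\<lambda>x. tdelta (sV c v, w) x - c * tdelta (v, w) x) \<in> tensor_rel sV sW"
| scr: "(\<lambda>x. tdelta (v, sW c w) x - c * tdelta (v, w) x) \<in> tensor_rel sV sW"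
| add: "f \<in> tensor_rel sV sW \<Longrightarrow> g \<in> tensor_rel sV sW \<Longrightarrow> (\<lambda>x. f x + g x) \<in> tensor_rel sV sW"
| smult: "f \<in> tensor_rel sV sW \<Longrightarrow> (\<lambda>x. c * f x) \<in> tensor_rel sV sW"

(* diagonal action on the free space: g \<cdot> \<delta>(v,w) = \<delta>(\<rho> g v, \<sigma> g w) *)
definition tensor_act ::
  "('g, 'b) monoid_scheme \<Rightarrow> ('g \<Rightarrow> 'v \<Rightarrow> 'v) \<Rightarrow> ('g \<Rightarrow> 'w \<Rightarrow> 'w) \<Rightarrow> 'g \<Rightarrow> ('v \<times> 'w \<Rightarrow> 'k) \<Rightarrow> ('v \<times> 'w \<Rightarrow> 'k)" where
  "tensor_act G \<rho> \<sigma> g f = (\<lambda>(x, y). f (\<rho> (inv\<^bsub>G\<^esub> g) x, \<sigma> (inv\<^bsub>G\<^esub> g) y))"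

(* chi\<oplus>chi is a subrepresentation of V \<otimes> W: there is an injective G-equivariant k-linear map
   k^2 (with action chi\<oplus>chi) \<rightarrow> V \<otimes> W; it is given by the images [t1], [t2] of the two
   standard basis vectors, (a,b) \<mapsto> a[t1] + b[t2]. *)
definition double_char_in_tensor ::
  "('g, 'b) monoid_scheme \<Rightarrow> ('k::field \<Rightarrow> 'v::ab_group_add \<Rightarrow> 'v) \<Rightarrow> ('g \<Rightarrow> 'v \<Rightarrow> 'v)
     \<Rightarrow> ('k \<Rightarrow> 'w::ab_group_add \<Rightarrow> 'w) \<Rightarrow> ('g \<Rightarrow> 'w \<Rightarrow> 'w) \<Rightarrow> ('g \<Rightarrow> 'k) \<Rightarrow> bool" where
  "double_char_in_tensor G sV \<rho> sW \<sigma> chi \<longleftrightarrow>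
     (\<exists>t1 t2 :: 'v \<times> 'w \<Rightarrow> 'k. tensor_free t1 \<and> tensor_free t2 \<and>
        (\<forall>g\<in>carrier G. (\<lambda>x. tensor_act G \<rho> \<sigma> g t1 x - chi g * t1 x) \<in> tensor_rel sV sW) \<and>
        (\<forall>g\<in>carrier G. (\<lambda>x. tensor_act G \<rho> \<sigma> g t2 x - chi g * t2 x) \<in> tensor_rel sV sW) \<and>
        (\<forall>a b. (\<lambda>x. a * t1 x + b * t2 x) \<in> tensor_rel sV sW \<longrightarrow> a = 0 \<and> b = 0))"

end

theory Submission imports Defs "Jordan_Normal_Form.Char_Poly" begin

definition supp :: "('a \<Rightarrow> 'k::zero) \<Rightarrow> 'a set" where "supp f = {p. f p \<noteq> 0}"

locale tens = V: vector_space sV + W: vector_space sW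
  for sV :: "'k::field \<Rightarrow> 'v::ab_group_add \<Rightarrow> 'v" and sW :: "'k \<Rightarrow> 'w::ab_group_add \<Rightarrow> 'w"
begin

definition phi :: "('v \<times> 'w) set \<Rightarrow> ('v \<times> 'w \<Rightarrow> 'k) \<Rightarrow> ('v \<Rightarrow> 'k) \<Rightarrow> 'w" where
  "phi D f l = (\<Sum>p\<in>D. sW (f p * l (fst p)) (snd p))"

definition Phi :: "('v \<times> 'w \<Rightarrow> 'k) \<Rightarrow> ('v \<Rightarrow> 'k) \<Rightarrow> 'w" where
  "Phi f l = phi (supp f) f l"

lemma phi_add: "phi D (\<lambda>x. f x + g x) l = phi D f l + phi D g l"
  unfolding phi_def by (simp add: distrib_right W.scale_left_distrib sum.distrib)

lemma phi_diff: "phi D (\<lambda>x. f x - g x) l = phi D f l - phi D g l"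
  unfolding phi_def by (simp add: left_diff_distrib W.scale_left_diff_distrib sum_subtractf)

lemma phi_smult: "phi D (\<lambda>x. c * f x) l = sW c (phi D f l)"
  unfolding phi_def by (simp add: W.scale_sum_right mult.assoc)

lemma phi_delta: "finite D \<Longrightarrow> a \<in> D \<Longrightarrow> phi D (tdelta a) l = sW (l (fst a)) (snd a)"
  unfolding phi_def tdelta_def
proof -
  assume "finite D" "a \<in> D"
  have "(\<Sum>p\<in>D. sW ((if p = a then 1 else 0) * l (fst p)) (snd p))
     = (\<Sum>p\<in>D. if p = a then sW (l (fst a)) (snd a) else 0)"
    by (rule sum.cong) auto
  also have "\<dots> = sW (l (fst a)) (snd a)" using \<open>finite D\<close> \<open>a \<in> D\<close> by simp
  finally show "(\<Sum>p\<in>D. sW ((\<lambda>x. if x = a then 1 else 0) p * l (fst p)) (snd p)) = sW (l (fst a)) (snd a)" .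
qed

lemma Phi_eq: assumes "finite D" "supp f \<subseteq> D" shows "Phi f l = phi D f l"
  unfolding Phi_def phi_def
  by (rule sum.mono_neutral_left) (use assms in \<open>auto simp: supp_def\<close>)

abbreviation R where "R \<equiv> tensor_rel sV sW"

lemma R_neg: "f \<in> R \<Longrightarrow> (\<lambda>x. - f x) \<in> R"
  using tensor_rel.smult[of f sV sW "-1"] by simp

lemma R_diff: "f \<in> R \<Longrightarrow> g \<in> R \<Longrightarrow> (\<lambda>x. f x - g x) \<in> R"
  using tensor_rel.add[OF _ R_neg, of f g] by simp

lemma R_lin: "f \<in> R \<Longrightarrow> g \<in> R \<Longrightarrow> (\<lambda>x. a * f x + b * g x) \<in> R"
  by (intro tensor_rel.add tensor_rel.smult)

lemma R_sum: "finite S \<Longrightarrow> (\<And>i. i \<in> S \<Longrightarrow> f i \<in> R) \<Longrightarrow> (\<lambda>x. \<Sum>i\<in>S. f i x) \<in> R"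
proof (induction S rule: finite_induct)
  case empty then show ?case using tensor_rel.zero by simp
next
  case (insert a S) then show ?case using tensor_rel.add[of "f a" sV sW "\<lambda>x. \<Sum>i\<in>S. f i x"] by simp
qed

lemma supp_delta: "supp (tdelta a) \<subseteq> {a}" by (auto simp: supp_def tdelta_def)

lemma R_fin: "f \<in> R \<Longrightarrow> finite (supp f)"
proof (induction rule: tensor_rel.induct)
  case zero then show ?case by (simp add: supp_def)
next
  case (addl v v' w) show ?case
    by (rule finite_subset[of _ "{(v+v',w),(v,w),(v',w)}"]) (auto simp: supp_def tdelta_def)
next
  case (addr v w w') show ?case
    by (rule finite_subset[of _ "{(v,w+w'),(v,w),(v,w')}"]) (auto simp: supp_def tdelta_def)
next
  case (scl c v w) show ?case
    by (rule finite_subset[of _ "{(sV c v,w),(v,w)}"]) (auto simp: supp_def tdelta_def)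
next
  case (scr v c w) show ?case
    by (rule finite_subset[of _ "{(v,sW c w),(v,w)}"]) (auto simp: supp_def tdelta_def)
next
  case (add f g) show ?case
    by (rule finite_subset[of _ "supp f \<union> supp g"]) (use add in \<open>auto simp: supp_def\<close>)
next
  case (smult f c) show ?case
    by (rule finite_subset[of _ "supp f"]) (use smult in \<open>auto simp: supp_def\<close>)
qed

lemma Phi_R: assumes "f \<in> R" "Vector_Spaces.linear sV (*) l" shows "Phi f l = 0"
  using assms(1)
proof (induction rule: tensor_rel.induct)
  case zero then show ?case by (simp add: Phi_def phi_def supp_def)
next
  case (addl v v' w)
  let ?D = "{(v+v',w),(v,w),(v',w)}"
  have "Phi (\<lambda>x. tdelta (v + v', w) x - tdelta (v, w) x - tdelta (v', w) x) l
     = phi ?D (\<lambda>x. tdelta (v + v', w) x - tdelta (v, w) x - tdelta (v', w) x) l"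
    by (rule Phi_eq) (auto simp: supp_def tdelta_def)
  also have "\<dots> = 0"
  proof -
    have "l (v + v') = l v + l v'" using assms(2) unfolding Vector_Spaces.linear_iff by blast
    then show ?thesis by (simp add: phi_diff phi_delta W.scale_left_distrib)
  qed
  finally show ?case .
next
  case (addr v w w')
  let ?D = "{(v,w+w'),(v,w),(v,w')}"
  have "Phi (\<lambda>x. tdelta (v, w + w') x - tdelta (v, w) x - tdelta (v, w') x) l
     = phi ?D (\<lambda>x. tdelta (v, w + w') x - tdelta (v, w) x - tdelta (v, w') x) l"
    by (rule Phi_eq) (auto simp: supp_def tdelta_def)
  also have "\<dots> = 0"
    by (simp add: phi_diff phi_delta W.scale_right_distrib)
  finally show ?case .
next
  case (scl c v w)
  let ?D = "{(sV c v,w),(v,w)}"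
  have "Phi (\<lambda>x. tdelta (sV c v, w) x - c * tdelta (v, w) x) l
     = phi ?D (\<lambda>x. tdelta (sV c v, w) x - c * tdelta (v, w) x) l"
    by (rule Phi_eq) (auto simp: supp_def tdelta_def)
  also have "\<dots> = 0" using assms(2)
    by (simp add: phi_diff phi_delta phi_smult Vector_Spaces.linear_iff)
  finally show ?case .
next
  case (scr v c w)
  let ?D = "{(v,sW c w),(v,w)}"
  have "Phi (\<lambda>x. tdelta (v, sW c w) x - c * tdelta (v, w) x) l
     = phi ?D (\<lambda>x. tdelta (v, sW c w) x - c * tdelta (v, w) x) l"
    by (rule Phi_eq) (auto simp: supp_def tdelta_def)
  also have "\<dots> = 0"
    by (simp add: phi_diff phi_delta phi_smult mult.commute)
  finally show ?case .
next
  case (add f g)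
  have "Phi (\<lambda>x. f x + g x) l = phi (supp f \<union> supp g) (\<lambda>x. f x + g x) l"
    by (rule Phi_eq) (use R_fin[OF add(1)] R_fin[OF add(2)] in \<open>auto simp: supp_def\<close>)
  also have "\<dots> = Phi f l + Phi g l"
    by (simp add: phi_add Phi_eq[symmetric] R_fin add(1,2))
  finally show ?case using add by simp
next
  case (smult f c)
  have "Phi (\<lambda>x. c * f x) l = phi (supp f) (\<lambda>x. c * f x) l"
    by (rule Phi_eq) (use R_fin[OF smult(1)] in \<open>auto simp: supp_def\<close>)
  also have "\<dots> = sW c (Phi f l)" by (simp add: phi_smult Phi_def)
  finally show ?case using smult by simp
qed

definition eqR where "eqR f g \<longleftrightarrow> (\<lambda>x. f x - g x) \<in> R"

lemma eqR_refl: "eqR f f" unfolding eqR_def using tensor_rel.zero by simp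

lemma eqR_cong: "eqR f g \<Longrightarrow> (\<And>x. f x = f' x) \<Longrightarrow> (\<And>x. g x = g' x) \<Longrightarrow> eqR f' g'"
proof -
  assume "eqR f g" "\<And>x. f x = f' x" "\<And>x. g x = g' x"
  then have "f = f'" "g = g'" by auto
  then show "eqR f' g'" using \<open>eqR f g\<close> by simp
qed

lemma eqR_sym: "eqR f g \<Longrightarrow> eqR g f"
  unfolding eqR_def using R_neg by fastforce

lemma eqR_trans: "eqR f g \<Longrightarrow> eqR g h \<Longrightarrow> eqR f h"
  unfolding eqR_def using tensor_rel.add by fastforce

lemma eqR_add: "eqR f f' \<Longrightarrow> eqR g g' \<Longrightarrow> eqR (\<lambda>x. f x + g x) (\<lambda>x. f' x + g' x)"
  unfolding eqR_def using tensor_rel.add[of "\<lambda>x. f x - f' x" sV sW "\<lambda>x. g x - g' x"]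
  by (simp add: algebra_simps)

lemma eqR_smult: "eqR f g \<Longrightarrow> eqR (\<lambda>x. c * f x) (\<lambda>x. c * g x)"
  unfolding eqR_def using tensor_rel.smult[of "\<lambda>x. f x - g x" sV sW c]
  by (simp add: algebra_simps)

lemma eqR_sum: "finite S \<Longrightarrow> (\<And>i. i \<in> S \<Longrightarrow> eqR (f i) (g i)) \<Longrightarrow>
   eqR (\<lambda>x. \<Sum>i\<in>S. f i x) (\<lambda>x. \<Sum>i\<in>S. g i x)"
proof (induction S rule: finite_induct)
  case empty then show ?case by (simp add: eqR_refl)
next
  case (insert a S)
  then show ?case using eqR_add[of "f a" "g a" "\<lambda>x. \<Sum>i\<in>S. f i x" "\<lambda>x. \<Sum>i\<in>S. g i x"] by simp
qed

lemma eqR_zero: "f \<in> R \<Longrightarrow> eqR f (\<lambda>_. 0)" unfolding eqR_def by simp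

lemma eqR_zeroD: "eqR f (\<lambda>_. 0) \<Longrightarrow> f \<in> R" unfolding eqR_def by simp

lemma delta0l: "tdelta (0, w) \<in> R"
proof -
  have "(\<lambda>x. tdelta (0 + 0, w) x - tdelta (0, w) x - tdelta (0, w) x) \<in> R" by (rule tensor_rel.addl)
  from R_neg[OF this] show ?thesis by simp
qed

lemma delta0r: "tdelta (v, 0) \<in> R"
proof -
  have "(\<lambda>x. tdelta (v, 0 + 0) x - tdelta (v, 0) x - tdelta (v, 0) x) \<in> R" by (rule tensor_rel.addr)
  from R_neg[OF this] show ?thesis by simp
qed

lemma R1: "finite S \<Longrightarrow> eqR (tdelta (\<Sum>i\<in>S. a i, w)) (\<lambda>x. \<Sum>i\<in>S. tdelta (a i, w) x)"
proof (induction S rule: finite_induct)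
  case empty then show ?case using eqR_zero[OF delta0l] by simp
next
  case (insert i S)
  have 1: "eqR (tdelta (a i + (\<Sum>i\<in>S. a i), w)) (\<lambda>x. tdelta (a i, w) x + tdelta (\<Sum>i\<in>S. a i, w) x)"
    using tensor_rel.addl[of "a i" "\<Sum>i\<in>S. a i" w sV sW] unfolding eqR_def by (simp add: algebra_simps)
  have 2: "eqR (\<lambda>x. tdelta (a i, w) x + tdelta (\<Sum>i\<in>S. a i, w) x) (\<lambda>x. tdelta (a i, w) x + (\<Sum>i\<in>S. tdelta (a i, w) x))"
    by (rule eqR_add[OF eqR_refl insert.IH])
  from eqR_trans[OF 1 2] insert show ?case by simp
qed

lemma R3: "finite S \<Longrightarrow> eqR (tdelta (v, \<Sum>i\<in>S. a i)) (\<lambda>x. \<Sum>i\<in>S. tdelta (v, a i) x)"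
proof (induction S rule: finite_induct)
  case empty then show ?case using eqR_zero[OF delta0r] by simp
next
  case (insert i S)
  have 1: "eqR (tdelta (v, a i + (\<Sum>i\<in>S. a i))) (\<lambda>x. tdelta (v, a i) x + tdelta (v, \<Sum>i\<in>S. a i) x)"
    using tensor_rel.addr[of v "a i" "\<Sum>i\<in>S. a i" sV sW] unfolding eqR_def by (simp add: algebra_simps)
  have 2: "eqR (\<lambda>x. tdelta (v, a i) x + tdelta (v, \<Sum>i\<in>S. a i) x) (\<lambda>x. tdelta (v, a i) x + (\<Sum>i\<in>S. tdelta (v, a i) x))"
    by (rule eqR_add[OF eqR_refl insert.IH])
  from eqR_trans[OF 1 2] insert show ?case by simp
qed

lemma R2: "eqR (tdelta (sV c v, w)) (tdelta (v, sW c w))"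
proof -
  have a: "eqR (tdelta (sV c v, w)) (\<lambda>x. c * tdelta (v, w) x)"
    unfolding eqR_def by (rule tensor_rel.scl)
  have b: "eqR (tdelta (v, sW c w)) (\<lambda>x. c * tdelta (v, w) x)"
    unfolding eqR_def by (rule tensor_rel.scr)
  show ?thesis by (rule eqR_trans[OF a eqR_sym[OF b]])
qed

lemma R4: "eqR (\<lambda>x. c * tdelta (v, w) x) (tdelta (v, sW c w))"
proof -
  have "eqR (tdelta (v, sW c w)) (\<lambda>x. c * tdelta (v, w) x)"
    unfolding eqR_def by (rule tensor_rel.scr)
  then show ?thesis by (rule eqR_sym)
qed

lemma lin0: assumes "Vector_Spaces.linear s1 s2 f" shows "f 0 = 0"
proof -
  have "f (0 + 0) = f 0 + f 0" using assms unfolding Vector_Spaces.linear_iff by blast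
  then show ?thesis by simp
qed

lemma lin_add: "Vector_Spaces.linear s1 s2 f \<Longrightarrow> f (x + y) = f x + f y"
  unfolding Vector_Spaces.linear_iff by blast

lemma lin_scale: "Vector_Spaces.linear s1 s2 f \<Longrightarrow> f (s1 c x) = s2 c (f x)"
  unfolding Vector_Spaces.linear_iff by blast

lemma lin_sum: "Vector_Spaces.linear s1 s2 f \<Longrightarrow> f (\<Sum>i\<in>S. g i) = (\<Sum>i\<in>S. f (g i))"
proof (induction S rule: infinite_finite_induct)
  case (infinite A)
  then show ?case using lin0 by simp
next
  case empty
  then show ?case using lin0 by simp
next
  case (insert x F) then show ?case by (simp add: lin_add)
qed

lemma KEY_a:
  assumes "finite D" "supp t \<subseteq> D" "\<forall>p\<in>D. fst p = (\<Sum>e\<in>E. sV (r (fst p) e) e)"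
    "Vector_Spaces.linear sV (*) l"
  shows "Phi t l = (\<Sum>e\<in>E. sW (l e) (\<Sum>p\<in>D. sW (t p * r (fst p) e) (snd p)))"
proof -
  have lf: "l (fst p) = (\<Sum>e\<in>E. r (fst p) e * l e)" if "p \<in> D" for p
  proof -
    have "l (fst p) = l (\<Sum>e\<in>E. sV (r (fst p) e) e)" using assms(3) that by simp
    also have "\<dots> = (\<Sum>e\<in>E. l (sV (r (fst p) e) e))" by (rule lin_sum[OF assms(4)])
    also have "\<dots> = (\<Sum>e\<in>E. r (fst p) e * l e)" using assms(4) by (simp add: Vector_Spaces.linear_iff)
    finally show ?thesis .
  qed
  have "Phi t l = (\<Sum>p\<in>D. sW (t p * l (fst p)) (snd p))"
    using Phi_eq[OF assms(1,2)] by (simp add: phi_def)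
  also have "\<dots> = (\<Sum>p\<in>D. \<Sum>e\<in>E. sW (l e) (sW (t p * r (fst p) e) (snd p)))"
    by (rule sum.cong[OF refl]) (simp add: lf sum_distrib_left W.scale_sum_left mult.commute mult.left_commute)
  also have "\<dots> = (\<Sum>e\<in>E. \<Sum>p\<in>D. sW (l e) (sW (t p * r (fst p) e) (snd p)))"
    by (rule sum.swap)
  also have "\<dots> = (\<Sum>e\<in>E. sW (l e) (\<Sum>p\<in>D. sW (t p * r (fst p) e) (snd p)))"
    by (simp add: W.scale_sum_right)
  finally show ?thesis .
qed

lemma KEY_b:
  assumes "finite D" "supp t \<subseteq> D" "\<forall>p\<in>D. fst p = (\<Sum>e\<in>E. sV (r (fst p) e) e)" "finite E"
    "\<forall>e\<in>E. (\<Sum>p\<in>D. sW (t p * r (fst p) e) (snd p)) = 0"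
  shows "t \<in> R"
proof -
  have t_eq: "t x = (\<Sum>p\<in>D. t p * tdelta p x)" for x
  proof (cases "x \<in> D")
    case True
    have "(\<Sum>p\<in>D. t p * tdelta p x) = (\<Sum>p\<in>D. if p = x then t x else 0)"
      by (rule sum.cong) (auto simp: tdelta_def)
    then show ?thesis using True assms(1) by simp
  next
    case False
    then have "t x = 0" using assms(2) by (auto simp: supp_def)
    moreover have "(\<Sum>p\<in>D. t p * tdelta p x) = 0"
      by (rule sum.neutral) (use False in \<open>auto simp: tdelta_def\<close>)
    ultimately show ?thesis by simp
  qed
  have 2: "eqR (tdelta p) (\<lambda>x. \<Sum>e\<in>E. tdelta (e, sW (r (fst p) e) (snd p)) x)" if "p \<in> D" for p
  proof -
    have "eqR (tdelta (\<Sum>e\<in>E. sV (r (fst p) e) e, snd p)) (\<lambda>x. \<Sum>e\<in>E. tdelta (sV (r (fst p) e) e, snd p) x)"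
      by (rule R1[OF assms(4)])
    moreover have "eqR (\<lambda>x. \<Sum>e\<in>E. tdelta (sV (r (fst p) e) e, snd p) x) (\<lambda>x. \<Sum>e\<in>E. tdelta (e, sW (r (fst p) e) (snd p)) x)"
      by (rule eqR_sum[OF assms(4) R2])
    ultimately have "eqR (tdelta (\<Sum>e\<in>E. sV (r (fst p) e) e, snd p)) (\<lambda>x. \<Sum>e\<in>E. tdelta (e, sW (r (fst p) e) (snd p)) x)"
      by (rule eqR_trans)
    moreover have "(\<Sum>e\<in>E. sV (r (fst p) e) e, snd p) = p" using assms(3) that by (metis prod.collapse)
    ultimately show ?thesis by simp
  qed
  have 3: "eqR (\<lambda>x. \<Sum>p\<in>D. t p * tdelta p x) (\<lambda>x. \<Sum>p\<in>D. t p * (\<Sum>e\<in>E. tdelta (e, sW (r (fst p) e) (snd p)) x))"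
    by (rule eqR_sum[OF assms(1)]) (rule eqR_smult[OF 2])
  have 4: "eqR (\<lambda>x. \<Sum>e\<in>E. \<Sum>p\<in>D. t p * tdelta (e, sW (r (fst p) e) (snd p)) x)
                (\<lambda>x. \<Sum>e\<in>E. \<Sum>p\<in>D. tdelta (e, sW (t p * r (fst p) e) (snd p)) x)"
    apply (rule eqR_sum[OF assms(4)], rule eqR_sum[OF assms(1)])
    subgoal for e p using R4[of "t p" e "sW (r (fst p) e) (snd p)"] by simp
    done
  have 5: "eqR (\<lambda>x. \<Sum>e\<in>E. \<Sum>p\<in>D. tdelta (e, sW (t p * r (fst p) e) (snd p)) x)
                (\<lambda>x. \<Sum>e\<in>E. tdelta (e, \<Sum>p\<in>D. sW (t p * r (fst p) e) (snd p)) x)"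
    by (rule eqR_sum[OF assms(4)], rule eqR_sym, rule R3[OF assms(1)])
  have 6: "eqR (\<lambda>x. \<Sum>e\<in>E. tdelta (e, \<Sum>p\<in>D. sW (t p * r (fst p) e) (snd p)) x) (\<lambda>_. 0)"
    by (rule eqR_zero, rule R_sum[OF assms(4)]) (use assms(5) delta0r in auto)
  have h3: "eqR t (\<lambda>x. \<Sum>e\<in>E. \<Sum>p\<in>D. t p * tdelta (e, sW (r (fst p) e) (snd p)) x)"
  proof (rule eqR_cong[OF 3])
    fix x show "(\<Sum>p\<in>D. t p * tdelta p x) = t x" by (rule t_eq[symmetric])
    show "(\<Sum>p\<in>D. t p * (\<Sum>e\<in>E. tdelta (e, sW (r (fst p) e) (snd p)) x)) =
      (\<Sum>e\<in>E. \<Sum>p\<in>D. t p * tdelta (e, sW (r (fst p) e) (snd p)) x)"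
      unfolding sum_distrib_left by (rule sum.swap)
  qed
  have "eqR t (\<lambda>_. 0)" using eqR_trans[OF eqR_trans[OF eqR_trans[OF h3 4] 5] 6] .
  then show ?thesis by (rule eqR_zeroD)
qed

end

lemma EIG:
  fixes M :: "'a \<Rightarrow> 'a \<Rightarrow> 'k::field"
  assumes ac: "alg_closed TYPE('k)" and fin: "finite E" and ne: "E \<noteq> {}"
  shows "\<exists>c a. (\<exists>e\<in>E. a e \<noteq> 0) \<and> (\<forall>e\<in>E. (\<Sum>e'\<in>E. a e' * M e' e) = c * a e)"
proof -
  define n where "n = card E"
  obtain f where bij: "bij_betw f {0..<n} E" using ex_bij_betw_nat_finite[OF fin] unfolding n_def by blast
  have npos: "n > 0" using fin ne by (simp add: n_def card_gt_0_iff)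
  define A :: "'k mat" where "A = mat n n (\<lambda>(i, j). M (f j) (f i))"
  have A: "A \<in> carrier_mat n n" by (simp add: A_def)
  have "degree (char_poly A) = n" using degree_monic_char_poly[OF A] by simp
  then obtain c where "poly (char_poly A) c = 0" using ac npos unfolding alg_closed_def by auto
  then have "eigenvalue A c" using eigenvalue_root_char_poly[OF A] by simp
  then obtain v where ev: "eigenvector A v c" unfolding eigenvalue_def by blast
  then have v: "v \<in> carrier_vec n" "v \<noteq> 0\<^sub>v n" "A *\<^sub>v v = c \<cdot>\<^sub>v v"
    using A unfolding eigenvector_def by auto
  have inj: "inj_on f {0..<n}" using bij bij_betw_def by blast
  define a where "a e = v $ (the_inv_into {0..<n} f e)" for e
  have af: "a (f i) = v $ i" if "i < n" for i
    using the_inv_into_f_f[OF inj] that by (simp add: a_def)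
  have ex: "\<exists>e\<in>E. a e \<noteq> 0"
  proof (rule ccontr)
    assume "\<not> ?thesis"
    then have "\<forall>i<n. v $ i = 0" using af bij bij_betwE by fastforce
    then have "v = 0\<^sub>v n" using v(1) by (intro eq_vecI) auto
    then show False using v(2) by simp
  qed
  have "\<forall>e\<in>E. (\<Sum>e'\<in>E. a e' * M e' e) = c * a e"
  proof
    fix e assume e: "e \<in> E"
    then obtain i where i: "i < n" "e = f i" using bij by (auto simp: bij_betw_def)
    have "(\<Sum>e'\<in>E. a e' * M e' e) = (\<Sum>j\<in>{0..<n}. a (f j) * M (f j) e)"
      using sum.reindex_bij_betw[OF bij, of "\<lambda>e'. a e' * M e' e"] by simp
    also have "\<dots> = (\<Sum>j\<in>{0..<n}. v $ j * M (f j) (f i))"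
      by (rule sum.cong) (auto simp: af i)
    also have "\<dots> = (A *\<^sub>v v) $ i"
      using i v(1) by (auto simp: A_def scalar_prod_def mult.commute intro: sum.cong)
    also have "\<dots> = c * v $ i" using v(3) i v(1) by simp
    finally show "(\<Sum>e'\<in>E. a e' * M e' e) = c * a e" using af i by simp
  qed
  with ex show ?thesis by blast
qed

locale tsetup = tens sV sW
  for sV :: "'k::field \<Rightarrow> 'v::ab_group_add \<Rightarrow> 'v" and sW :: "'k \<Rightarrow> 'w::ab_group_add \<Rightarrow> 'w" +
  fixes G :: "('g, 'b) monoid_scheme" and \<rho> :: "'g \<Rightarrow> 'v \<Rightarrow> 'v" and \<sigma> :: "'g \<Rightarrow> 'w \<Rightarrow> 'w"
    and chi :: "'g \<Rightarrow> 'k"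
  assumes grp: "group G" and repV: "representation G sV \<rho>" and repW: "representation G sW \<sigma>"
begin

lemma rho_lin: "g \<in> carrier G \<Longrightarrow> Vector_Spaces.linear sV sV (\<rho> g)"
  using repV unfolding representation_def by blast

lemma sigma_lin: "g \<in> carrier G \<Longrightarrow> Vector_Spaces.linear sW sW (\<sigma> g)"
  using repW unfolding representation_def by blast

lemma rho_inv:
  assumes g: "g \<in> carrier G"
  shows "\<rho> g (\<rho> (inv\<^bsub>G\<^esub> g) x) = x" "\<rho> (inv\<^bsub>G\<^esub> g) (\<rho> g x) = x"
    "\<sigma> g (\<sigma> (inv\<^bsub>G\<^esub> g) y) = y" "\<sigma> (inv\<^bsub>G\<^esub> g) (\<sigma> g y) = y"
proof -
  have ig: "inv\<^bsub>G\<^esub> g \<in> carrier G" using group.inv_closed[OF grp g] .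
  have 1: "g \<otimes>\<^bsub>G\<^esub> inv\<^bsub>G\<^esub> g = \<one>\<^bsub>G\<^esub>" using group.r_inv[OF grp g] .
  have 2: "inv\<^bsub>G\<^esub> g \<otimes>\<^bsub>G\<^esub> g = \<one>\<^bsub>G\<^esub>" using group.l_inv[OF grp g] .
  have rV: "\<rho> \<one>\<^bsub>G\<^esub> = id" "\<forall>g\<in>carrier G. \<forall>h\<in>carrier G. \<rho> (g \<otimes>\<^bsub>G\<^esub> h) = \<rho> g \<circ> \<rho> h"
    using repV unfolding representation_def by blast+
  have rW: "\<sigma> \<one>\<^bsub>G\<^esub> = id" "\<forall>g\<in>carrier G. \<forall>h\<in>carrier G. \<sigma> (g \<otimes>\<^bsub>G\<^esub> h) = \<sigma> g \<circ> \<sigma> h"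
    using repW unfolding representation_def by blast+
  show "\<rho> g (\<rho> (inv\<^bsub>G\<^esub> g) x) = x" using rV g ig 1 by (metis comp_apply id_apply)
  show "\<rho> (inv\<^bsub>G\<^esub> g) (\<rho> g x) = x" using rV g ig 2 by (metis comp_apply id_apply)
  show "\<sigma> g (\<sigma> (inv\<^bsub>G\<^esub> g) y) = y" using rW g ig 1 by (metis comp_apply id_apply)
  show "\<sigma> (inv\<^bsub>G\<^esub> g) (\<sigma> g y) = y" using rW g ig 2 by (metis comp_apply id_apply)
qed

abbreviation act where "act g t \<equiv> tensor_act G \<rho> \<sigma> g t"

lemma act_apply: "act g t (x, y) = t (\<rho> (inv\<^bsub>G\<^esub> g) x, \<sigma> (inv\<^bsub>G\<^esub> g) y)"
  by (simp add: tensor_act_def)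

lemma act_h: "g \<in> carrier G \<Longrightarrow> act g t (\<rho> g (fst p), \<sigma> g (snd p)) = t p"
  by (cases p) (simp add: act_apply rho_inv)

lemma supp_act: assumes "g \<in> carrier G"
  shows "supp (act g t) \<subseteq> (\<lambda>p. (\<rho> g (fst p), \<sigma> g (snd p))) ` supp t"
proof
  fix q assume q: "q \<in> supp (act g t)"
  obtain x y where qe: "q = (x, y)" by (cases q)
  let ?p = "(\<rho> (inv\<^bsub>G\<^esub> g) x, \<sigma> (inv\<^bsub>G\<^esub> g) y)"
  have "?p \<in> supp t" using q qe by (simp add: supp_def act_apply)
  moreover have "q = (\<rho> g (fst ?p), \<sigma> g (snd ?p))" using qe rho_inv[OF assms] by simp
  ultimately show "q \<in> (\<lambda>p. (\<rho> g (fst p), \<sigma> g (snd p))) ` supp t" by blast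
qed

lemma act_Phi:
  assumes g: "g \<in> carrier G" and fin: "finite (supp t)"
  shows "Phi (act g t) l = \<sigma> g (Phi t (l \<circ> \<rho> g))"
proof -
  let ?h = "\<lambda>p. (\<rho> g (fst p), \<sigma> g (snd p))"
  let ?D = "supp t"
  have inj: "inj_on ?h ?D"
  proof (rule inj_onI)
    fix p q assume "?h p = ?h q"
    then have "\<rho> (inv\<^bsub>G\<^esub> g) (\<rho> g (fst p)) = \<rho> (inv\<^bsub>G\<^esub> g) (\<rho> g (fst q))"
      "\<sigma> (inv\<^bsub>G\<^esub> g) (\<sigma> g (snd p)) = \<sigma> (inv\<^bsub>G\<^esub> g) (\<sigma> g (snd q))" by auto
    then show "p = q" using rho_inv[OF g] by (simp add: prod_eq_iff)
  qed
  have "Phi (act g t) l = phi (?h ` ?D) (act g t) l"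
    by (rule Phi_eq) (use fin supp_act[OF g] in auto)
  also have "\<dots> = (\<Sum>p\<in>?D. sW (act g t (?h p) * l (fst (?h p))) (snd (?h p)))"
    unfolding phi_def by (simp add: sum.reindex[OF inj])
  also have "\<dots> = (\<Sum>p\<in>?D. \<sigma> g (sW (t p * (l \<circ> \<rho> g) (fst p)) (snd p)))"
    by (rule sum.cong[OF refl]) (simp add: act_h[OF g] lin_scale[OF sigma_lin[OF g]])
  also have "\<dots> = \<sigma> g (\<Sum>p\<in>?D. sW (t p * (l \<circ> \<rho> g) (fst p)) (snd p))"
    by (rule lin_sum[OF sigma_lin[OF g], symmetric])
  also have "\<dots> = \<sigma> g (Phi t (l \<circ> \<rho> g))" by (simp add: Phi_def phi_def)
  finally show ?thesis .
qed

definition Tp where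
  "Tp t \<longleftrightarrow> finite (supp t) \<and> (\<forall>g\<in>carrier G. (\<lambda>x. act g t x - chi g * t x) \<in> R)"

lemma Tp_lin: assumes "Tp t1" "Tp t2" shows "Tp (\<lambda>x. a * t1 x + b * t2 x)"
  unfolding Tp_def
proof
  show "finite (supp (\<lambda>x. a * t1 x + b * t2 x))"
    by (rule finite_subset[of _ "supp t1 \<union> supp t2"]) (use assms in \<open>auto simp: supp_def Tp_def\<close>)
  show "\<forall>g\<in>carrier G. (\<lambda>x. act g (\<lambda>x. a * t1 x + b * t2 x) x - chi g * (a * t1 x + b * t2 x)) \<in> R"
  proof
    fix g assume g: "g \<in> carrier G"
    have "(\<lambda>x. a * (act g t1 x - chi g * t1 x) + b * (act g t2 x - chi g * t2 x)) \<in> R"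
      by (rule R_lin) (use assms g in \<open>auto simp: Tp_def\<close>)
    moreover have "(\<lambda>x. act g (\<lambda>x. a * t1 x + b * t2 x) x - chi g * (a * t1 x + b * t2 x))
       = (\<lambda>x. a * (act g t1 x - chi g * t1 x) + b * (act g t2 x - chi g * t2 x))"
      by (auto simp: fun_eq_iff tensor_act_def algebra_simps)
    ultimately show "(\<lambda>x. act g (\<lambda>x. a * t1 x + b * t2 x) x - chi g * (a * t1 x + b * t2 x)) \<in> R"
      by simp
  qed
qed

lemma Tequiv:
  assumes T: "Tp t" and g: "g \<in> carrier G" and l: "Vector_Spaces.linear sV (*) l"
  shows "\<sigma> g (Phi t (l \<circ> \<rho> g)) = sW (chi g) (Phi t l)"
proof -
  have fin: "finite (supp t)" and inR: "(\<lambda>x. act g t x - chi g * t x) \<in> R" using T g by (auto simp: Tp_def)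
  have fa: "finite (supp (act g t))" using supp_act[OF g] fin by (meson finite_imageI finite_subset)
  let ?D = "supp (act g t) \<union> supp t"
  have "0 = Phi (\<lambda>x. act g t x - chi g * t x) l" using Phi_R[OF inR l] by simp
  also have "\<dots> = phi ?D (\<lambda>x. act g t x - chi g * t x) l"
    by (rule Phi_eq) (use fin fa in \<open>auto simp: supp_def\<close>)
  also have "\<dots> = Phi (act g t) l - sW (chi g) (Phi t l)"
    using fin fa by (simp add: phi_diff phi_smult Phi_eq[symmetric])
  finally have "Phi (act g t) l = sW (chi g) (Phi t l)" by simp
  then show ?thesis using act_Phi[OF g fin] by simp
qed

lemma lin_ext_V: assumes "V.independent E" shows "\<exists>l. Vector_Spaces.linear sV (*) l \<and> (\<forall>e\<in>E. l e = a e)"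
proof -
  interpret P: vector_space_pair sV "(*) :: 'k \<Rightarrow> 'k \<Rightarrow> 'k"
    by (intro vector_space_pair.intro V.vector_space_axioms vector_space_over_itself.vector_space_axioms)
  show ?thesis using P.linear_independent_extend[OF assms] by blast
qed

lemma lin_ext_W: assumes "W.independent E" shows "\<exists>l. Vector_Spaces.linear sW (*) l \<and> (\<forall>e\<in>E. l e = a e)"
proof -
  interpret P: vector_space_pair sW "(*) :: 'k \<Rightarrow> 'k \<Rightarrow> 'k"
    by (intro vector_space_pair.intro W.vector_space_axioms vector_space_over_itself.vector_space_axioms)
  show ?thesis using P.linear_independent_extend[OF assms] by blast
qed

lemma L5:
  assumes irrV: "irreducible_rep G sV \<rho>" and T: "Tp t" and D: "finite D" "supp t \<subseteq> D"
    and E: "finite E" "V.independent E" and rep: "\<forall>p\<in>D. fst p = (\<Sum>e\<in>E. sV (r (fst p) e) e)"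
    and l0: "Vector_Spaces.linear sV (*) l0" "Phi t l0 = 0" "l0 v0 \<noteq> 0"
  shows "t \<in> R"
proof (rule ccontr)
  assume nR: "t \<notin> R"
  define U where "U e = (\<Sum>p\<in>D. sW (t p * r (fst p) e) (snd p))" for e
  obtain e1 where e1: "e1 \<in> E" "U e1 \<noteq> 0"
    using KEY_b[OF D rep E(1)] nR unfolding U_def by blast
  have "W.independent {U e1}" using e1 by simp
  then obtain mu where mu: "Vector_Spaces.linear sW (*) mu" "mu (U e1) = 1"
    using lin_ext_W[of "{U e1}" "\<lambda>_. 1"] by auto
  define K where "K = {l. Vector_Spaces.linear sV (*) l \<and> Phi t l = 0}"
  define A where "A = {v. \<forall>l\<in>K. l v = 0}"
  have sub: "V.subspace A"
    unfolding V.subspace_def A_def K_def using lin0 lin_add lin_scale by fastforce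
  have stab: "\<forall>g\<in>carrier G. \<forall>v\<in>A. \<rho> g v \<in> A"
  proof (intro ballI)
    fix g v assume g: "g \<in> carrier G" and v: "v \<in> A"
    show "\<rho> g v \<in> A" unfolding A_def
    proof (intro CollectI ballI)
      fix l assume l: "l \<in> K"
      have ll: "Vector_Spaces.linear sV (*) (l \<circ> \<rho> g)"
        using Vector_Spaces.linear_compose[OF rho_lin[OF g]] l by (auto simp: K_def)
      have "\<sigma> g (Phi t (l \<circ> \<rho> g)) = 0" using Tequiv[OF T g] l by (auto simp: K_def)
      then have "\<sigma> (inv\<^bsub>G\<^esub> g) (\<sigma> g (Phi t (l \<circ> \<rho> g))) = 0"
        using lin0[OF sigma_lin[OF group.inv_closed[OF grp g]]] by simp
      then have "Phi t (l \<circ> \<rho> g) = 0" using rho_inv[OF g] by simp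
      then have "l \<circ> \<rho> g \<in> K" using ll by (simp add: K_def)
      then show "l (\<rho> g v) = 0" using v by (auto simp: A_def)
    qed
  qed
  have "A = {0} \<or> A = UNIV" using irrV sub stab unfolding irreducible_rep_def by blast
  moreover have "A \<noteq> UNIV" using l0 by (auto simp: A_def K_def)
  ultimately have A0: "A = {0}" by blast
  define v where "v = (\<Sum>e\<in>E. sV (mu (U e)) e)"
  have "v \<in> A" unfolding A_def
  proof (intro CollectI ballI)
    fix l assume l: "l \<in> K"
    then have ll: "Vector_Spaces.linear sV (*) l" and z: "Phi t l = 0" by (auto simp: K_def)
    have "l v = (\<Sum>e\<in>E. mu (U e) * l e)" unfolding v_def
      by (simp add: lin_sum[OF ll] lin_scale[OF ll])
    also have "\<dots> = mu (\<Sum>e\<in>E. sW (l e) (U e))"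
      by (simp add: lin_sum[OF mu(1)] lin_scale[OF mu(1)] mult.commute)
    also have "(\<Sum>e\<in>E. sW (l e) (U e)) = Phi t l"
      unfolding U_def by (rule KEY_a[OF D rep ll, symmetric])
    finally show "l v = 0" using z lin0[OF mu(1)] by simp
  qed
  then have "v = 0" using A0 by simp
  then have "\<forall>e\<in>E. mu (U e) = 0" using V.independentD[OF E(2) E(1) subset_refl, of "\<lambda>e. mu (U e)"]
    unfolding v_def by blast
  then show False using e1 mu by auto
qed



lemma SURJ:
  assumes irrW: "irreducible_rep G sW \<sigma>" and T: "Tp t" and D: "finite D" "supp t \<subseteq> D"
    and E: "finite E" "V.independent E" and rep: "\<forall>p\<in>D. fst p = (\<Sum>e\<in>E. sV (r (fst p) e) e)"
    and nR: "t \<notin> R"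
  shows "\<exists>a. y = (\<Sum>e\<in>E. sW (a e) (\<Sum>p\<in>D. sW (t p * r (fst p) e) (snd p)))"
proof -
  define U where "U e = (\<Sum>p\<in>D. sW (t p * r (fst p) e) (snd p))" for e
  define I where "I = {y. \<exists>a. y = (\<Sum>e\<in>E. sW (a e) (U e))}"
  have sub: "W.subspace I"
    unfolding W.subspace_def I_def
  proof (intro conjI ballI allI)
    show "0 \<in> {y. \<exists>a. y = (\<Sum>e\<in>E. sW (a e) (U e))}"
      by (rule CollectI, rule exI[of _ "\<lambda>_. 0"]) simp
  next
    fix x y assume "x \<in> {y. \<exists>a. y = (\<Sum>e\<in>E. sW (a e) (U e))}" "y \<in> {y. \<exists>a. y = (\<Sum>e\<in>E. sW (a e) (U e))}"
    then obtain a b where "x = (\<Sum>e\<in>E. sW (a e) (U e))" "y = (\<Sum>e\<in>E. sW (b e) (U e))" by blast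
    then have "x + y = (\<Sum>e\<in>E. sW (a e + b e) (U e))"
      by (simp add: W.scale_left_distrib sum.distrib)
    then show "x + y \<in> {y. \<exists>a. y = (\<Sum>e\<in>E. sW (a e) (U e))}" by (intro CollectI exI[of _ "\<lambda>e. a e + b e"])
  next
    fix c x assume "x \<in> {y. \<exists>a. y = (\<Sum>e\<in>E. sW (a e) (U e))}"
    then obtain a where "x = (\<Sum>e\<in>E. sW (a e) (U e))" by blast
    then have "sW c x = (\<Sum>e\<in>E. sW (c * a e) (U e))"
      by (simp add: W.scale_sum_right)
    then show "sW c x \<in> {y. \<exists>a. y = (\<Sum>e\<in>E. sW (a e) (U e))}" by (intro CollectI exI[of _ "\<lambda>e. c * a e"])
  qed
  have stab: "\<forall>g\<in>carrier G. \<forall>y\<in>I. \<sigma> g y \<in> I"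
  proof (intro ballI)
    fix g y assume g: "g \<in> carrier G" and y: "y \<in> I"
    then obtain a where ya: "y = (\<Sum>e\<in>E. sW (a e) (U e))" by (auto simp: I_def)
    obtain l where l: "Vector_Spaces.linear sV (*) l" "\<forall>e\<in>E. l e = a e" using lin_ext_V[OF E(2)] by blast
    have ig: "inv\<^bsub>G\<^esub> g \<in> carrier G" using group.inv_closed[OF grp g] .
    define l' where "l' = l \<circ> \<rho> (inv\<^bsub>G\<^esub> g)"
    have l': "Vector_Spaces.linear sV (*) l'"
      unfolding l'_def by (rule Vector_Spaces.linear_compose[OF rho_lin[OF ig] l(1)])
    have l'r: "l' \<circ> \<rho> g = l" using rho_inv[OF g] by (auto simp: l'_def fun_eq_iff)
    have "y = Phi t l" unfolding ya KEY_a[OF D rep l(1)] U_def using l(2) by simp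
    then have "\<sigma> g y = \<sigma> g (Phi t (l' \<circ> \<rho> g))" using l'r by simp
    also have "\<dots> = sW (chi g) (Phi t l')" by (rule Tequiv[OF T g l'])
    also have "\<dots> = (\<Sum>e\<in>E. sW (chi g * l' e) (U e))"
      unfolding KEY_a[OF D rep l'] U_def by (simp add: W.scale_sum_right mult.assoc)
    finally show "\<sigma> g y \<in> I" unfolding I_def by (intro CollectI exI[of _ "\<lambda>e. chi g * l' e"])
  qed
  obtain e1 where e1: "e1 \<in> E" "U e1 \<noteq> 0"
    using KEY_b[OF D rep E(1)] nR unfolding U_def by blast
  have "U e1 \<in> I"
  proof -
    have "(\<Sum>e\<in>E. sW (if e = e1 then 1 else 0) (U e)) = (\<Sum>e\<in>E. if e = e1 then U e1 else 0)"
      by (rule sum.cong) auto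
    also have "\<dots> = U e1" using e1 E(1) by simp
    finally show ?thesis unfolding I_def by (intro CollectI exI[of _ "\<lambda>e. if e = e1 then 1 else 0"]) simp
  qed
  then have "I \<noteq> {0}" using e1 by blast
  then have "I = UNIV" using irrW sub stab unfolding irreducible_rep_def by blast
  then show ?thesis unfolding I_def U_def by blast
qed

lemma MAIN:
  assumes irrV: "irreducible_rep G sV \<rho>" and irrW: "irreducible_rep G sW \<sigma>"
    and ac: "alg_closed TYPE('k)" and dc: "double_char_in_tensor G sV \<rho> sW \<sigma> chi"
  shows False
proof -
  obtain t1 t2 :: "'v \<times> 'w \<Rightarrow> 'k" where P: "tensor_free t1 \<and> tensor_free t2 \<and>
        (\<forall>g\<in>carrier G. (\<lambda>x. act g t1 x - chi g * t1 x) \<in> R) \<and>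
        (\<forall>g\<in>carrier G. (\<lambda>x. act g t2 x - chi g * t2 x) \<in> R) \<and>
        (\<forall>a b. (\<lambda>x. a * t1 x + b * t2 x) \<in> R \<longrightarrow> a = 0 \<and> b = 0)"
    using dc unfolding double_char_in_tensor_def by (elim exE) (rule that)
  have f1: "tensor_free t1" and f2: "tensor_free t2"
    and c1: "\<forall>g\<in>carrier G. (\<lambda>x. act g t1 x - chi g * t1 x) \<in> R"
    and c2: "\<forall>g\<in>carrier G. (\<lambda>x. act g t2 x - chi g * t2 x) \<in> R"
    and ind: "\<forall>a b. (\<lambda>x. a * t1 x + b * t2 x) \<in> R \<longrightarrow> a = 0 \<and> b = 0"
    using P by simp_all
  have T1: "Tp t1" using f1 c1 by (simp add: Tp_def tensor_free_def supp_def)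
  have T2: "Tp t2" using f2 c2 by (simp add: Tp_def tensor_free_def supp_def)
  define D where "D = supp t1 \<union> supp t2"
  have finD: "finite D" using T1 T2 by (simp add: D_def Tp_def)
  obtain E where E: "E \<subseteq> fst ` D" "V.independent E" "fst ` D \<subseteq> V.span E"
    using V.maximal_independent_subset[of "fst ` D"] by blast
  have finE: "finite E" using E(1) finD finite_subset by blast
  define r where "r x = (SOME c. x = (\<Sum>e\<in>E. sV (c e) e))" for x
  have rep: "\<forall>p\<in>D. fst p = (\<Sum>e\<in>E. sV (r (fst p) e) e)"
  proof
    fix p assume "p \<in> D"
    then have "fst p \<in> V.span E" using E(3) by blast
    then have "\<exists>c. fst p = (\<Sum>e\<in>E. sV (c e) e)" using V.span_finite[OF finE] by auto
    then show "fst p = (\<Sum>e\<in>E. sV (r (fst p) e) e)" unfolding r_def by (rule someI_ex)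
  qed
  define U where "U t e = (\<Sum>p\<in>D. sW (t p * r (fst p) e) (snd p))" for t e
  have s1: "supp t1 \<subseteq> D" and s2: "supp t2 \<subseteq> D" by (auto simp: D_def)
  have nR1: "t1 \<notin> R"
  proof
    assume "t1 \<in> R"
    then have "(\<lambda>x. 1 * t1 x + 0 * t2 x) \<in> R" by simp
    then have "(1::'k) = 0 \<and> (0::'k) = 0" using ind[rule_format, of 1 0] by simp
    then show False by simp
  qed
  have "\<forall>e'. \<exists>a. U t2 e' = (\<Sum>e\<in>E. sW (a e) (U t1 e))"
    using SURJ[OF irrW T1 finD s1 finE E(2) rep nR1] unfolding U_def by blast
  from choice[OF this] obtain M where M0: "\<forall>e'. U t2 e' = (\<Sum>e\<in>E. sW (M e' e) (U t1 e))" by blast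
  then have M: "\<And>e'. U t2 e' = (\<Sum>e\<in>E. sW (M e' e) (U t1 e))" by blast
  have Ene: "E \<noteq> {}"
  proof
    assume "E = {}"
    then have "t1 \<in> R" using KEY_b[OF finD s1 rep finE] by simp
    then show False using nR1 by simp
  qed
  obtain c a where a0: "\<exists>e\<in>E. a e \<noteq> 0" and eig: "\<forall>e\<in>E. (\<Sum>e'\<in>E. a e' * M e' e) = c * a e"
    using EIG[OF ac finE Ene, of M] by (elim exE conjE) blast
  obtain l0 where l0: "Vector_Spaces.linear sV (*) l0" "\<forall>e\<in>E. l0 e = a e"
    using lin_ext_V[OF E(2)] by blast
  obtain e0 where e0: "e0 \<in> E" "a e0 \<noteq> 0" using a0 by blast
  define t where "t = (\<lambda>x. (- c) * t1 x + 1 * t2 x)"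
  have T: "Tp t" unfolding t_def by (rule Tp_lin[OF T1 T2])
  have sD: "supp t \<subseteq> D"
  proof
    fix x assume x: "x \<in> supp t"
    show "x \<in> D"
    proof (rule ccontr)
      assume "x \<notin> D"
      then have "t1 x = 0" "t2 x = 0" using s1 s2 by (auto simp: supp_def)
      then show False using x by (simp add: supp_def t_def)
    qed
  qed
  have Ut: "U t e = U t2 e - sW c (U t1 e)" for e
    by (simp add: U_def t_def left_diff_distrib W.scale_left_diff_distrib sum_subtractf W.scale_sum_right mult.assoc)
  have A2: "(\<Sum>e\<in>E. sW (a e) (U t2 e)) = (\<Sum>e''\<in>E. sW (c * a e'') (U t1 e''))"
  proof -
    have "(\<Sum>e\<in>E. sW (a e) (U t2 e)) = (\<Sum>e\<in>E. \<Sum>e''\<in>E. sW (a e * M e e'') (U t1 e''))"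
      by (simp add: M W.scale_sum_right)
    also have "\<dots> = (\<Sum>e''\<in>E. \<Sum>e\<in>E. sW (a e * M e e'') (U t1 e''))" by (rule sum.swap)
    also have "\<dots> = (\<Sum>e''\<in>E. sW (\<Sum>e\<in>E. a e * M e e'') (U t1 e''))"
      by (simp add: W.scale_sum_left)
    also have "\<dots> = (\<Sum>e''\<in>E. sW (c * a e'') (U t1 e''))"
      by (rule sum.cong[OF refl]) (simp add: eig)
    finally show ?thesis .
  qed
  have "Phi t l0 = (\<Sum>e\<in>E. sW (l0 e) (U t e))" unfolding U_def by (rule KEY_a[OF finD sD rep l0(1)])
  also have "\<dots> = (\<Sum>e\<in>E. sW (a e) (U t e))" using l0(2) by simp
  also have "\<dots> = (\<Sum>e\<in>E. sW (a e) (U t2 e)) - (\<Sum>e\<in>E. sW (c * a e) (U t1 e))"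
    by (simp add: Ut W.scale_right_diff_distrib sum_subtractf mult.commute)
  also have "\<dots> = 0" unfolding A2 by simp
  finally have "Phi t l0 = 0" .
  then have "t \<in> R" using L5[OF irrV T finD sD finE E(2) rep l0(1), of e0] l0(2) e0 by simp
  then have "- c = 0 \<and> (1::'k) = 0" using ind[rule_format, of "- c" 1] unfolding t_def by simp
  then show False by simp
qed

end

theorem mainTheorem14:
  fixes G :: "('g, 'b) monoid_scheme" and T :: "'g topology"
    and sV :: "'k::field \<Rightarrow> 'v::ab_group_add \<Rightarrow> 'v" and \<rho> :: "'g \<Rightarrow> 'v \<Rightarrow> 'v"
    and sW :: "'k \<Rightarrow> 'w::ab_group_add \<Rightarrow> 'w" and \<sigma> :: "'g \<Rightarrow> 'w \<Rightarrow> 'w"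
    and chi :: "'g \<Rightarrow> 'k"
  assumes "profinite_group G T"
    and "alg_closed TYPE('k)"
    and "smooth_rep G T sV \<rho>" and "irreducible_rep G sV \<rho>"
    and "smooth_rep G T sW \<sigma>" and "irreducible_rep G sW \<sigma>"
    and "smooth_rep G T (*) (\<lambda>g c. chi g * c)"
  shows "\<not> double_char_in_tensor G sV \<rho> sW \<sigma> chi"
proof
  assume dc: "double_char_in_tensor G sV \<rho> sW \<sigma> chi"
  have grp: "group G" using assms(1) unfolding profinite_group_def topological_group_on_def by blast
  have rV: "representation G sV \<rho>" and rW: "representation G sW \<sigma>"
    using assms(4,6) unfolding irreducible_rep_def by blast+
  then have vV: "vector_space sV" and vW: "vector_space sW" unfolding representation_def by blast+
  interpret S: tsetup sV sW G \<rho> \<sigma> chi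
    by (intro tsetup.intro tens.intro tsetup_axioms.intro vV vW grp rV rW)
  show False by (rule S.MAIN[OF assms(4) assms(6) assms(2) dc])
qed

end
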